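(* For every $Q\in\mathcal{P}$ and every $0<v<2$, $$D^*(v,Q)=\inf\left\{\mathrm{KL}_2\!\left(Q(A)+\tfrac v2,\,Q(A)\right):\ A\in\mathcal{F},\ 0<Q(A)\le 1-\tfrac v2\right\}.$$
   Context: Let $(\Omega,\mathcal{F},\mu)$ be a finite or $\sigma$-finite measure space, and let $\mathcal{P}$ be the set of probability measures on $(\Omega,\mathcal{F})$ absolutely continuous with respect to $\mu$. For $P,Q\in\mathcal{P}$ the lower-case letters $p,q$ denote their densities with respect to $\mu$. The Kullback–Leibler divergence is $D(P\Vert Q)=\int\ln\frac{dP}{dQ}\,dP$ if $P\ll Q$, and $+\infty$ otherwise. The total variation distance is $V(P,Q)=\int_\Omega|p-q|\,d\mu$. For $v>0$ define $D^*(v,Q)=\inf\{D(P\Vert Q):P\in\mathcal{P},\ V(P,Q)\ge v\}$. All infima over empty sets equal $+\infty$. For $p,q\in[0,1]$, $\mathrm{KL}_2(p,q)=p\ln\frac pq+(1-p)\ln\frac{1-p}{1-q}$, with the conventions $0\ln(0/x)=0$ and $a\ln(a/0)=+\infty$ for $a>0$. *)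

theory Defs
  imports "HOL-Probability.Probability"
begin

definition Pset :: "'a measure \<Rightarrow> 'a measure set" where
  "Pset M = {P. prob_space P \<and> sets P = sets M \<and> absolutely_continuous M P}"

text \<open>The Radon--Nikodym derivative \<open>dP/dQ\<close> is \<open>RN_deriv Q P\<close>. Since the negative part of
  \<open>ln (dP/dQ)\<close> is always \<open>P\<close>-integrable, non-integrability means the integral is \<open>+\<infinity>\<close>.\<close>
definition KLdiv :: "'a measure \<Rightarrow> 'a measure \<Rightarrow> ereal" where
  "KLdiv P Q =
    (if absolutely_continuous Q P then
       (if integrable P (\<lambda>x. ln (enn2real (RN_deriv Q P x)))
        then ereal (\<integral>x. ln (enn2real (RN_deriv Q P x)) \<partial>P)
        else \<infinity>)
     else \<infinity>)"

definition TV :: "'a measure \<Rightarrow> 'a measure \<Rightarrow> 'a measure \<Rightarrow> ennreal" where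
  "TV M P Q = (\<integral>\<^sup>+ x. ennreal \<bar>enn2real (RN_deriv M P x) - enn2real (RN_deriv M Q x)\<bar> \<partial>M)"

text \<open>\<open>D\<^sup>*(v,Q) = inf {D(P\<parallel>Q) : P \<in> \<P>, V(P,Q) \<ge> v}\<close> (Inf of the empty set is \<open>+\<infinity>\<close> in ereal).\<close>
definition Dstar :: "'a measure \<Rightarrow> real \<Rightarrow> 'a measure \<Rightarrow> ereal" where
  "Dstar M v Q = Inf {KLdiv P Q | P. P \<in> Pset M \<and> TV M P Q \<ge> ennreal v}"

definition xlogxy :: "real \<Rightarrow> real \<Rightarrow> ereal" where
  "xlogxy a b = (if a = 0 then 0 else if b = 0 then \<infinity> else ereal (a * ln (a / b)))"

definition KL2 :: "real \<Rightarrow> real \<Rightarrow> ereal" where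
  "KL2 p q = xlogxy p q + xlogxy (1 - p) (1 - q)"

end

theory Submission
  imports Defs
begin

lemma g_mono:
  fixes a x y :: real
  assumes "0 < a" "a \<le> y" "y \<le> x" "x < 1"
  shows "y * ln (y / a) + (1 - y) * ln ((1 - y) / (1 - a))
       \<le> x * ln (x / a) + (1 - x) * ln ((1 - x) / (1 - a))"
proof -
  let ?g = "\<lambda>t::real. t * (ln t - ln a) + (1 - t) * (ln (1 - t) - ln (1 - a))"
  have "?g y \<le> ?g x"
  proof (rule DERIV_nonneg_imp_nondecreasing[OF assms(3)])
    fix t assume t: "y \<le> t" "t \<le> x"
    then have t0: "0 < t" "t < 1" using assms by auto
    have D: "DERIV ?g t :> ((ln t - ln a) + t * (1 / t) + (-1) * (ln (1 - t) - ln (1 - a))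
              + (1 - t) * (- 1 / (1 - t)))"
      using t0 by (auto intro!: derivative_eq_intros)
    have eq: "(ln t - ln a) + t * (1 / t) + (-1) * (ln (1 - t) - ln (1 - a))
              + (1 - t) * (- 1 / (1 - t)) = (ln t - ln a) + (ln (1 - a) - ln (1 - t))"
      using t0 by (simp add: field_simps)
    have "ln t - ln a \<ge> 0" using t t0 assms by simp
    moreover have "ln (1 - a) - ln (1 - t) \<ge> 0" using t t0 assms by simp
    ultimately show "\<exists>d. DERIV ?g t :> d \<and> d \<ge> 0" using D[unfolded eq] by (intro exI[of _ "(ln t - ln a) + (ln (1 - a) - ln (1 - t))"]) auto
  qed
  moreover have "y * ln (y / a) + (1 - y) * ln ((1 - y) / (1 - a)) = ?g y"
    using assms by (simp add: ln_div)
  moreover have "x * ln (x / a) + (1 - x) * ln ((1 - x) / (1 - a)) = ?g x"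
    using assms by (simp add: ln_div)
  ultimately show ?thesis by simp
qed

lemma rn_setup:
  assumes Q: "prob_space Q" and P: "prob_space P" and sP: "sets P = sets Q"
    and ac: "absolutely_continuous Q P"
  shows "P = density Q (\<lambda>x. ennreal (enn2real (RN_deriv Q P x)))"
proof -
  interpret Q: prob_space Q by fact
  interpret P: prob_space P by fact
  have "density Q (RN_deriv Q P) = P" using Q.density_RN_deriv[OF ac sP] .
  moreover have "AE x in Q. RN_deriv Q P x \<noteq> \<infinity>"
    using Q.RN_deriv_finite[OF _ ac sP] P.sigma_finite_measure_axioms by blast
  then have "AE x in Q. RN_deriv Q P x = ennreal (enn2real (RN_deriv Q P x))"
    by eventually_elim (simp add: less_top)
  then have "density Q (RN_deriv Q P) = density Q (\<lambda>x. ennreal (enn2real (RN_deriv Q P x)))"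
    by (intro density_cong) auto
  ultimately show ?thesis by simp
qed

lemma measure_dens:
  fixes f :: "'a \<Rightarrow> real"
  assumes P: "prob_space P" and Pd: "P = density Q (\<lambda>x. ennreal (f x))"
    and f: "f \<in> borel_measurable Q" "\<And>x. 0 \<le> f x" and B: "B \<in> sets Q"
  shows "measure P B = (\<integral>x. f x * indicator B x \<partial>Q)"
    and "integrable Q f"
proof -
  have "integral\<^sup>L P (indicator B) = (\<integral>x. f x *\<^sub>R (indicator B x::real) \<partial>Q)"
    unfolding Pd by (subst integral_density) (use f B in auto)
  moreover have "integral\<^sup>L P (indicator B :: _ \<Rightarrow> real) = measure P B"
    using B sets.sets_into_space[OF B] by (simp add: Pd Int_absorb2)
  ultimately show "measure P B = (\<integral>x. f x * indicator B x \<partial>Q)" by simp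
  interpret P: prob_space P by fact
  have "integrable P (\<lambda>_. 1::real)" by simp
  then have "integrable (density Q (\<lambda>x. ennreal (f x))) (\<lambda>_. 1::real)" using Pd by simp
  then have "integrable Q (\<lambda>x. f x *\<^sub>R (1::real))"
    by (subst (asm) integrable_density) (use f in auto)
  then show "integrable Q f" by simp
qed

lemma kl_density0:
  fixes f :: "'a \<Rightarrow> real"
  assumes Pd: "P = density Q (\<lambda>x. ennreal (f x))" and f: "f \<in> borel_measurable Q" "\<And>x. 0 \<le> f x"
  shows "integrable P (\<lambda>x. ln (f x)) \<longleftrightarrow> integrable Q (\<lambda>x. f x * ln (f x))"
    and "(\<integral>x. ln (f x) \<partial>P) = (\<integral>x. f x * ln (f x) \<partial>Q)"
proof -
  show "integrable P (\<lambda>x. ln (f x)) \<longleftrightarrow> integrable Q (\<lambda>x. f x * ln (f x))"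
    unfolding Pd by (subst integrable_density) (use f in auto)
  show "(\<integral>x. ln (f x) \<partial>P) = (\<integral>x. f x * ln (f x) \<partial>Q)"
    unfolding Pd by (subst integral_density) (use f in auto)
qed

lemma kl_density:
  assumes Q: "prob_space Q" and P: "prob_space P" and sP: "sets P = sets Q"
    and ac: "absolutely_continuous Q P"
  shows "integrable P (\<lambda>x. ln (enn2real (RN_deriv Q P x))) \<longleftrightarrow>
         integrable Q (\<lambda>x. enn2real (RN_deriv Q P x) * ln (enn2real (RN_deriv Q P x)))"
    and "(\<integral>x. ln (enn2real (RN_deriv Q P x)) \<partial>P) =
         (\<integral>x. enn2real (RN_deriv Q P x) * ln (enn2real (RN_deriv Q P x)) \<partial>Q)"
  using kl_density0[OF rn_setup[OF assms]] by auto

lemma pt_ineq: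
  fixes t c :: real
  assumes "0 \<le> t" "0 < c"
  shows "t * ln c + t - c \<le> t * ln t"
proof (cases "t = 0")
  case True then show ?thesis using assms by simp
next
  case False
  then have t: "0 < t" using assms by simp
  have "ln (c / t) \<le> c / t - 1" using ln_le_minus_one[of "c/t"] t assms by simp
  then have "ln c - ln t \<le> c / t - 1" using t assms by (simp add: ln_div)
  then have "t * (ln c - ln t) \<le> t * (c / t - 1)" using t by (intro mult_left_mono) auto
  moreover have "t * (c / t - 1) = c - t" using t by (simp add: field_simps)
  moreover have "t * (ln c - ln t) = t * ln c - t * ln t" by (simp add: algebra_simps)
  ultimately show ?thesis by linarith
qed

lemma dp:
  fixes f :: "'a \<Rightarrow> real"
  assumes Q: "prob_space Q" and P: "prob_space P" and Pd: "P = density Q (\<lambda>x. ennreal (f x))"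
    and f: "f \<in> borel_measurable Q" "\<And>x. 0 \<le> f x"
    and int: "integrable Q (\<lambda>x. f x * ln (f x))" and B: "B \<in> sets Q" and c: "0 < c"
  shows "measure P B * ln c + measure P B - c * measure Q B \<le> (\<integral>x. f x * ln (f x) * indicator B x \<partial>Q)"
proof -
  interpret Q: prob_space Q by fact
  have mP: "measure P B = (\<integral>x. f x * indicator B x \<partial>Q)" and fi: "integrable Q f"
    using measure_dens[OF P Pd f B] by auto
  have i1: "integrable Q (\<lambda>x. f x * indicator B x)" by (rule integrable_real_mult_indicator[OF B fi])
  have i2: "integrable Q (indicator B :: _ \<Rightarrow> real)" using B by (simp add: Q.emeasure_eq_measure)
  have "(\<integral>x. ln c * (f x * indicator B x) + f x * indicator B x - c * indicator B x \<partial>Q)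
        = ln c * measure P B + measure P B - c * measure Q B"
    using i1 i2 B by (simp add: mP)
  moreover have "(\<integral>x. ln c * (f x * indicator B x) + f x * indicator B x - c * indicator B x \<partial>Q)
        \<le> (\<integral>x. f x * ln (f x) * indicator B x \<partial>Q)"
  proof (rule integral_mono)
    show "integrable Q (\<lambda>x. ln c * (f x * indicator B x) + f x * indicator B x - c * indicator B x)"
      using i1 i2 by auto
    show "integrable Q (\<lambda>x. f x * ln (f x) * indicator B x)"
      by (rule integrable_real_mult_indicator[OF B int])
    fix x show "ln c * (f x * indicator B x) + f x * indicator B x - c * indicator (B::'a set) x
        \<le> f x * ln (f x) * indicator B x"
      using pt_ineq[OF f(2)[of x] c] by (cases "x \<in> B") (auto simp: algebra_simps)
  qed
  ultimately show ?thesis by (simp add: algebra_simps)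
qed

lemma tv_lemma:
  fixes g :: "'a \<Rightarrow> real"
  assumes M: "sigma_finite_measure M" and Q: "Q \<in> Pset M" and P: "P \<in> Pset M"
    and g: "g \<in> borel_measurable Q" "\<And>x. 0 \<le> g x" and Pd: "P = density Q (\<lambda>x. ennreal (g x))"
  shows "TV M P Q = (\<integral>\<^sup>+x. ennreal \<bar>g x - 1\<bar> \<partial>Q)"
proof -
  interpret M: sigma_finite_measure M by fact
  have pQ: "prob_space Q" and sQ: "sets Q = sets M" and acQ: "absolutely_continuous M Q"
    using Q by (auto simp: Pset_def)
  have sP: "sets P = sets M" using P by (auto simp: Pset_def)
  interpret Q: prob_space Q by fact
  have Qd: "density M (RN_deriv M Q) = Q" using M.density_RN_deriv[OF acQ sQ] .
  have gM: "g \<in> borel_measurable M" using g(1) measurable_cong_sets[OF sQ refl] by blast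
  have Pd2: "density M (\<lambda>x. RN_deriv M Q x * ennreal (g x)) = P"
  proof -
    have "P = density (density M (RN_deriv M Q)) (\<lambda>x. ennreal (g x))" using Pd Qd by simp
    then show ?thesis using gM by (simp add: density_density_eq)
  qed
  have ae1: "AE x in M. RN_deriv M Q x * ennreal (g x) = RN_deriv M P x"
    by (rule M.RN_deriv_unique[OF _ Pd2]) (use gM in auto)
  have ae2: "AE x in M. RN_deriv M Q x \<noteq> \<infinity>"
    using M.RN_deriv_finite[OF _ acQ sQ] Q.sigma_finite_measure_axioms by blast
  have "TV M P Q = (\<integral>\<^sup>+x. RN_deriv M Q x * ennreal \<bar>g x - 1\<bar> \<partial>M)"
    unfolding TV_def
  proof (rule nn_integral_cong_AE)
    show "AE x in M. ennreal \<bar>enn2real (RN_deriv M P x) - enn2real (RN_deriv M Q x)\<bar> =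
                 RN_deriv M Q x * ennreal \<bar>g x - 1\<bar>"
      using ae1 ae2
    proof eventually_elim
      case (elim x)
      let ?r = "enn2real (RN_deriv M Q x)"
      have r: "RN_deriv M Q x = ennreal ?r" using elim(2) by (simp add: less_top)
      have "enn2real (RN_deriv M P x) = ?r * g x"
        using elim(1)[symmetric] g(2)[of x] by (simp add: enn2real_mult)
      then have "\<bar>enn2real (RN_deriv M P x) - ?r\<bar> = ?r * \<bar>g x - 1\<bar>"
      proof -
        have "?r * g x - ?r = ?r * (g x - 1)" by (simp add: algebra_simps)
        then show ?thesis using \<open>enn2real (RN_deriv M P x) = ?r * g x\<close> by (simp add: abs_mult)
      qed
      then show ?case by (subst r) (simp add: ennreal_mult)
    qed
  qed
  also have "\<dots> = (\<integral>\<^sup>+x. ennreal \<bar>g x - 1\<bar> \<partial>density M (RN_deriv M Q))"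
    using gM by (simp add: nn_integral_density)
  also have "\<dots> = (\<integral>\<^sup>+x. ennreal \<bar>g x - 1\<bar> \<partial>Q)" by (simp add: Qd)
  finally show ?thesis .
qed

lemma lower:
  assumes M: "sigma_finite_measure M" and Q: "Q \<in> Pset M" and P: "P \<in> Pset M"
    and v: "0 < v" and tv: "ennreal v \<le> TV M P Q" and fin: "KLdiv P Q \<noteq> \<infinity>"
  shows "\<exists>A. A \<in> sets M \<and> 0 < measure Q A \<and> measure Q A \<le> 1 - v / 2 \<and>
             KL2 (measure Q A + v / 2) (measure Q A) \<le> KLdiv P Q"
proof -
  have pQ: "prob_space Q" and sQ: "sets Q = sets M"
    using Q by (auto simp: Pset_def)
  have pP: "prob_space P" and sPM: "sets P = sets M"
    using P by (auto simp: Pset_def)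
  have sP: "sets P = sets Q" using sQ sPM by simp
  have spP: "space P = space Q" using sets_eq_imp_space_eq[OF sP] .
  interpret Q: prob_space Q by fact
  interpret P: prob_space P by fact
  have ac: "absolutely_continuous Q P" using fin by (auto simp: KLdiv_def split: if_splits)
  have intP: "integrable P (\<lambda>x. ln (enn2real (RN_deriv Q P x)))"
    using fin by (auto simp: KLdiv_def split: if_splits)
  define f where "f x = enn2real (RN_deriv Q P x)" for x
  have Pd: "P = density Q (\<lambda>x. ennreal (f x))" unfolding f_def by (rule rn_setup[OF pQ pP sP ac])
  have fm: "f \<in> borel_measurable Q" unfolding f_def by simp
  have f0: "\<And>x. 0 \<le> f x" unfolding f_def by simp
  have intQ: "integrable Q (\<lambda>x. f x * ln (f x))"
    using kl_density(1)[OF pQ pP sP ac] intP unfolding f_def by simp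
  have KL: "KLdiv P Q = ereal (\<integral>x. f x * ln (f x) \<partial>Q)"
    using kl_density(2)[OF pQ pP sP ac] intP ac unfolding f_def KLdiv_def by simp
  have fi: "integrable Q f" using measure_dens(2)[OF pP Pd fm f0, of "space Q"] by simp
  have int1: "(\<integral>x. f x \<partial>Q) = 1"
  proof -
    have "integral\<^sup>L P (\<lambda>_. 1::real) = (\<integral>x. f x *\<^sub>R (1::real) \<partial>Q)"
      unfolding Pd by (subst integral_density) (use fm f0 in auto)
    then show ?thesis using P.prob_space by simp
  qed
  define A where "A = {x \<in> space Q. 1 < f x}"
  have AQ: "A \<in> sets Q" unfolding A_def using fm by measurable
  have AS: "A \<inter> space Q = A" unfolding A_def by auto
  define a where "a = measure Q A"
  define b where "b = measure P A"
  have mb: "b = (\<integral>x. f x * indicator A x \<partial>Q)" unfolding b_def by (rule measure_dens(1)[OF pP Pd fm f0 AQ])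
  have iA: "integrable Q (\<lambda>x. f x * indicator A x)" by (rule integrable_real_mult_indicator[OF AQ fi])
  have iA2: "integrable Q (indicator A :: _ \<Rightarrow> real)" using AQ by (simp add: Q.emeasure_eq_measure)
  have "TV M P Q = (\<integral>\<^sup>+x. ennreal \<bar>f x - 1\<bar> \<partial>Q)"
    by (rule tv_lemma[OF M Q P fm f0 Pd])
  also have "\<dots> = ennreal (\<integral>x. \<bar>f x - 1\<bar> \<partial>Q)"
    by (rule nn_integral_eq_integral) (use fi in auto)
  also have "(\<integral>x. \<bar>f x - 1\<bar> \<partial>Q) = (\<integral>x. 2 * (f x * indicator A x) - 2 * indicator A x + 1 - f x \<partial>Q)"
    by (rule Bochner_Integration.integral_cong[OF refl]) (auto simp: A_def indicator_def)
  also have "\<dots> = 2 * (b - a)"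
    using iA iA2 fi int1 by (simp add: mb a_def AS Q.prob_space)
  finally have "ennreal v \<le> ennreal (2 * (b - a))" using tv by simp
  moreover have "0 \<le> 2 * (b - a)"
  proof -
    have "0 \<le> (\<integral>x. \<bar>f x - 1\<bar> \<partial>Q)" by simp
    also have "(\<integral>x. \<bar>f x - 1\<bar> \<partial>Q) = (\<integral>x. 2 * (f x * indicator A x) - 2 * indicator A x + 1 - f x \<partial>Q)"
      by (rule Bochner_Integration.integral_cong[OF refl]) (auto simp: A_def indicator_def)
    also have "\<dots> = 2 * (b - a)"
      using iA iA2 fi int1 by (simp add: mb a_def AS Q.prob_space)
    finally show ?thesis .
  qed
  ultimately have vb: "v / 2 \<le> b - a" by simp
  have a0: "0 \<le> a" unfolding a_def by simp
  have b1: "b \<le> 1" unfolding b_def by simp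
  have apos: "0 < a"
  proof (rule ccontr)
    assume "\<not> 0 < a"
    then have "a = 0" using a0 by simp
    then have "emeasure Q A = 0" by (simp add: a_def Q.emeasure_eq_measure)
    then have "emeasure P A = 0" using absolutely_continuousD[OF ac AQ] by simp
    then have "b = 0" by (simp add: b_def P.emeasure_eq_measure)
    then show False using vb a0 v by simp
  qed
  define C where "C = space Q - A"
  have CQ: "C \<in> sets Q" unfolding C_def using AQ by auto
  have mQC: "measure Q C = 1 - a" unfolding C_def a_def using Q.prob_compl[OF AQ] by simp
  have mPC: "measure P C = 1 - b" unfolding C_def b_def using P.prob_compl[of A] AQ sP spP by simp
  define IA where "IA = (\<integral>x. f x * ln (f x) * indicator A x \<partial>Q)"
  define IC where "IC = (\<integral>x. f x * ln (f x) * indicator C x \<partial>Q)"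
  have split: "(\<integral>x. f x * ln (f x) \<partial>Q) = IA + IC"
  proof -
    have "(\<integral>x. f x * ln (f x) \<partial>Q) = (\<integral>x. f x * ln (f x) * indicator A x + f x * ln (f x) * indicator C x \<partial>Q)"
      by (rule Bochner_Integration.integral_cong[OF refl]) (auto simp: C_def indicator_def)
    also have "\<dots> = IA + IC" unfolding IA_def IC_def
      by (rule Bochner_Integration.integral_add) (auto intro!: integrable_real_mult_indicator AQ CQ intQ)
    finally show ?thesis .
  qed
  have dpA: "b * ln (b / a) + b - (b / a) * a \<le> IA"
    unfolding IA_def b_def a_def
    using dp[OF pQ pP Pd fm f0 intQ AQ, of "b / a"] apos vb v a0 by (simp add: a_def b_def)
  then have dpA': "b * ln (b / a) \<le> IA" using apos by simp
  have a1: "a < 1" using vb v b1 by simp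
  let ?y = "a + v / 2"
  have KLe: "KLdiv P Q = ereal (IA + IC)" using KL split by simp
  have "KL2 ?y a \<le> ereal (IA + IC)"
  proof (cases "b < 1")
    case True
    have dpC: "(1 - b) * ln ((1 - b) / (1 - a)) + (1 - b) - ((1 - b) / (1 - a)) * (1 - a) \<le> IC"
      unfolding IC_def using dp[OF pQ pP Pd fm f0 intQ CQ, of "(1 - b) / (1 - a)"] True a1 mQC mPC
      by simp
    then have dpC': "(1 - b) * ln ((1 - b) / (1 - a)) \<le> IC" using a1 by simp
    have y1: "?y < 1" using True vb by simp
    have "?y * ln (?y / a) + (1 - ?y) * ln ((1 - ?y) / (1 - a)) \<le> b * ln (b / a) + (1 - b) * ln ((1 - b) / (1 - a))"
      by (rule g_mono) (use apos vb True v in auto)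
    moreover have "KL2 ?y a = ereal (?y * ln (?y / a) + (1 - ?y) * ln ((1 - ?y) / (1 - a)))"
      using apos v y1 by (simp add: KL2_def xlogxy_def)
    ultimately show ?thesis using dpA' dpC' by simp
  next
    case False
    then have b: "b = 1" using b1 by simp
    have IC0: "0 \<le> IC"
    proof (rule ccontr)
      assume neg: "\<not> 0 \<le> IC"
      define c where "c = - IC / (2 * (1 - a))"
      have c: "0 < c" unfolding c_def using neg a1 by (intro divide_pos_pos) auto
      have "0 * ln c + 0 - c * (1 - a) \<le> IC"
        unfolding IC_def using dp[OF pQ pP Pd fm f0 intQ CQ c] mQC mPC b by simp
      moreover have "c * (1 - a) = - IC / 2" unfolding c_def using a1 by (simp add: field_simps)
      ultimately show False using neg by simp
    qed
    have IA1: "ln (1 / a) \<le> IA" using dpA' b by simp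
    have la: "0 \<le> ln (1 / a)" using apos a1 by simp
    have "KL2 ?y a \<le> ereal (ln (1 / a))"
    proof (cases "?y = 1")
      case True
      then show ?thesis using apos by (simp add: KL2_def xlogxy_def)
    next
      case False
      then have y1: "?y < 1" using vb b by simp
      have "ln (?y / a) \<le> ln (1 / a)" using y1 apos v by (subst ln_le_cancel_iff) (auto simp: divide_right_mono)
      then have t1: "?y * ln (?y / a) \<le> ?y * ln (1 / a)" using apos v by (intro mult_left_mono) auto
      have t2: "?y * ln (1 / a) \<le> ln (1 / a)" using mult_right_mono[OF less_imp_le[OF y1] la] by simp
      have "ln ((1 - ?y) / (1 - a)) \<le> 0" using y1 a1 v by (subst ln_le_zero_iff) auto
      then have t3: "(1 - ?y) * ln ((1 - ?y) / (1 - a)) \<le> 0" using y1 by (simp add: mult_nonneg_nonpos)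
      have "KL2 ?y a = ereal (?y * ln (?y / a) + (1 - ?y) * ln ((1 - ?y) / (1 - a)))"
        using apos v y1 by (simp add: KL2_def xlogxy_def)
      then show ?thesis using t1 t2 t3 by simp
    qed
    moreover have "ereal (ln (1 / a)) \<le> ereal (IA + IC)" using IA1 IC0 by simp
    ultimately show ?thesis by (rule order_trans)
  qed
  moreover have "A \<in> sets M" using AQ sQ by simp
  moreover have "a \<le> 1 - v / 2" using vb b1 by simp
  ultimately show ?thesis using apos KLe unfolding a_def by auto
qed

lemma int_simple:
  assumes Q: "prob_space Q" and A: "A \<in> sets Q"
  shows "integrable Q (\<lambda>x. c0 + c1 * indicator A x :: real)"
    and "(\<integral>x. c0 + c1 * indicator A x \<partial>Q) = c0 + c1 * measure Q A"
proof -
  interpret Q: prob_space Q by fact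
  have i: "integrable Q (indicator A :: _ \<Rightarrow> real)" using A by (simp add: Q.emeasure_eq_measure)
  then show "integrable Q (\<lambda>x. c0 + c1 * indicator A x :: real)" by auto
  have AS: "A \<inter> space Q = A" using sets.sets_into_space[OF A] by auto
  show "(\<integral>x. c0 + c1 * indicator A x \<partial>Q) = c0 + c1 * measure Q A"
    using i by (simp add: AS Q.prob_space)
qed

lemma upper:
  assumes M: "sigma_finite_measure M" and Q: "Q \<in> Pset M" and v: "0 < v"
    and AM: "A \<in> sets M" and a0: "0 < measure Q A" and a1: "measure Q A \<le> 1 - v / 2"
  shows "\<exists>P. P \<in> Pset M \<and> ennreal v \<le> TV M P Q \<and>
             KLdiv P Q = KL2 (measure Q A + v / 2) (measure Q A)"
proof -
  have pQ: "prob_space Q" and sQ: "sets Q = sets M" and acQ: "absolutely_continuous M Q"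
    using Q by (auto simp: Pset_def)
  interpret Q: prob_space Q by fact
  have AQ: "A \<in> sets Q" using AM sQ by simp
  define a where "a = measure Q A"
  have apos: "0 < a" and a1': "a \<le> 1 - v / 2" using a0 a1 by (auto simp: a_def)
  define al where "al = (a + v / 2) / a"
  define be where "be = (1 - (a + v / 2)) / (1 - a)"
  have oa: "0 < 1 - a" using a1' v by simp
  have al1: "1 \<le> al" unfolding al_def using apos v by (simp add: field_simps)
  have be0: "0 \<le> be" unfolding be_def using a1' oa by (intro divide_nonneg_pos) auto
  have be1: "be \<le> 1" unfolding be_def using oa v by (simp add: field_simps)
  have ala: "al * a = a + v / 2" unfolding al_def using apos by simp
  have bea: "be * (1 - a) = 1 - (a + v / 2)" unfolding be_def using oa by simp
  define h where "h x = be + (al - be) * indicator A x" for x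
  have h0: "\<And>x. 0 \<le> h x" unfolding h_def using al1 be0 by (auto simp: indicator_def)
  have hm: "h \<in> borel_measurable Q" unfolding h_def using AQ by measurable
  define P where "P = density Q (\<lambda>x. ennreal (h x))"
  have sPQ: "sets P = sets Q" unfolding P_def by simp
  have spP: "space P = space Q" unfolding P_def by simp
  have hint: "integrable Q h" and hI: "(\<integral>x. h x \<partial>Q) = 1"
  proof -
    have e: "be + (al - be) * a = 1"
    proof -
      have "be + (al - be) * a = al * a + be * (1 - a)" by (simp add: algebra_simps)
      then show ?thesis using ala bea by simp
    qed
    show "integrable Q h" unfolding h_def by (rule int_simple(1)[OF pQ AQ])
    show "(\<integral>x. h x \<partial>Q) = 1"
      using int_simple(2)[OF pQ AQ, of be "al - be"] e unfolding h_def a_def[symmetric] by simp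
  qed
  have "emeasure P (space P) = (\<integral>\<^sup>+x. ennreal (h x) * indicator (space Q) x \<partial>Q)"
    unfolding spP unfolding P_def by (rule emeasure_density) (use hm in auto)
  also have "\<dots> = (\<integral>\<^sup>+x. ennreal (h x) \<partial>Q)"
    by (rule nn_integral_cong) auto
  also have "\<dots> = 1" using nn_integral_eq_integral[OF hint] h0 hI by simp
  finally have pP: "prob_space P" by (rule prob_spaceI)
  have acP: "absolutely_continuous Q P" unfolding P_def by (rule absolutely_continuousI_density) (use hm in simp)
  have PM: "P \<in> Pset M"
    unfolding Pset_def using pP sPQ sQ acQ acP by (auto simp: absolutely_continuous_def)
  have "TV M P Q = (\<integral>\<^sup>+x. ennreal \<bar>h x - 1\<bar> \<partial>Q)"
    by (rule tv_lemma[OF M Q PM hm h0 P_def])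
  also have "\<dots> = ennreal (\<integral>x. \<bar>h x - 1\<bar> \<partial>Q)"
    by (rule nn_integral_eq_integral) (use hint in auto)
  also have "(\<integral>x. \<bar>h x - 1\<bar> \<partial>Q) = (\<integral>x. (1 - be) + ((al - 1) - (1 - be)) * indicator A x \<partial>Q)"
    by (rule Bochner_Integration.integral_cong[OF refl]) (use al1 be1 in \<open>auto simp: h_def indicator_def\<close>)
  also have "\<dots> = v"
  proof -
    have "(1 - be) + ((al - 1) - (1 - be)) * a = (al * a - a) + ((1 - a) - be * (1 - a))"
      by (simp add: algebra_simps)
    also have "\<dots> = v" using ala bea by simp
    finally show ?thesis
      using int_simple(2)[OF pQ AQ, of "1 - be" "(al - 1) - (1 - be)"] unfolding a_def[symmetric]
      by simp
  qed
  finally have TVv: "ennreal v \<le> TV M P Q" by simp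
  have "AE x in Q. ennreal (h x) = RN_deriv Q P x"
    by (rule Q.RN_deriv_unique[OF _ P_def[symmetric]]) (use hm in auto)
  then have aef: "AE x in Q. enn2real (RN_deriv Q P x) = h x"
    by eventually_elim (use h0 in \<open>metis enn2real_ennreal\<close>)
  have hl: "(\<lambda>x. h x * ln (h x)) = (\<lambda>x. be * ln be + (al * ln al - be * ln be) * indicator A x)"
    by (auto simp: h_def indicator_def fun_eq_iff)
  have hlm: "(\<lambda>x. h x * ln (h x)) \<in> borel_measurable Q" using hm by measurable
  have hli: "integrable Q (\<lambda>x. h x * ln (h x))" unfolding hl by (rule int_simple(1)[OF pQ AQ])
  have hlI: "(\<integral>x. h x * ln (h x) \<partial>Q) = be * ln be + (al * ln al - be * ln be) * a"
    unfolding hl a_def by (rule int_simple(2)[OF pQ AQ])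
  have fli: "integrable Q (\<lambda>x. enn2real (RN_deriv Q P x) * ln (enn2real (RN_deriv Q P x)))"
    by (rule integrable_cong_AE_imp[OF hli]) (use aef in \<open>auto elim!: eventually_mono\<close>)
  have flI: "(\<integral>x. enn2real (RN_deriv Q P x) * ln (enn2real (RN_deriv Q P x)) \<partial>Q) = (\<integral>x. h x * ln (h x) \<partial>Q)"
    by (rule integral_cong_AE) (use aef hlm in \<open>auto elim!: eventually_mono\<close>)
  have KL: "KLdiv P Q = ereal (be * ln be + (al * ln al - be * ln be) * a)"
    using kl_density[OF pQ pP sPQ acP] fli flI hlI acP unfolding KLdiv_def by simp
  have "KL2 (a + v / 2) a = ereal (be * ln be + (al * ln al - be * ln be) * a)"
  proof (cases "1 - (a + v / 2) = 0")
    case True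
    then have "be = 0" unfolding be_def by simp
    moreover have "al = 1 / a" unfolding al_def using True by simp
    moreover have "a + v / 2 = 1" using True by simp
    ultimately show ?thesis using apos
      by (simp add: KL2_def xlogxy_def)
  next
    case False
    have "(a + v / 2) * ln al + (1 - (a + v / 2)) * ln be = be * ln be + (al * ln al - be * ln be) * a"
    proof -
      have "(al * a) * ln al + (be * (1 - a)) * ln be = be * ln be + (al * ln al - be * ln be) * a"
        by (simp add: algebra_simps)
      then show ?thesis using ala bea by simp
    qed
    then show ?thesis using False apos v oa
      by (simp add: KL2_def xlogxy_def al_def[symmetric] be_def[symmetric])
  qed
  then show ?thesis using PM TVv KL unfolding a_def by auto
qed

theorem mainTheorem11:
  fixes M Q :: "'a measure" and v :: real
  assumes "sigma_finite_measure M"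
    and "Q \<in> Pset M"
    and "0 < v" and "v < 2"
  shows "Dstar M v Q =
    Inf {KL2 (measure Q A + v / 2) (measure Q A) | A.
           A \<in> sets M \<and> 0 < measure Q A \<and> measure Q A \<le> 1 - v / 2}"
  unfolding Dstar_def
proof (rule antisym)
  show "Inf {KLdiv P Q |P. P \<in> Pset M \<and> ennreal v \<le> TV M P Q}
    \<le> Inf {KL2 (measure Q A + v / 2) (measure Q A) | A.
           A \<in> sets M \<and> 0 < measure Q A \<and> measure Q A \<le> 1 - v / 2}"
  proof (rule Inf_greatest)
    fix t assume "t \<in> {KL2 (measure Q A + v / 2) (measure Q A) | A.
           A \<in> sets M \<and> 0 < measure Q A \<and> measure Q A \<le> 1 - v / 2}"
    then obtain A where A: "A \<in> sets M" "0 < measure Q A" "measure Q A \<le> 1 - v / 2"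
      and t: "t = KL2 (measure Q A + v / 2) (measure Q A)" by blast
    obtain P where "P \<in> Pset M" "ennreal v \<le> TV M P Q" "KLdiv P Q = t"
      using upper[OF assms(1,2,3) A] t by blast
    then show "Inf {KLdiv P Q |P. P \<in> Pset M \<and> ennreal v \<le> TV M P Q} \<le> t"
      by (intro Inf_lower) blast
  qed
  show "Inf {KL2 (measure Q A + v / 2) (measure Q A) | A.
           A \<in> sets M \<and> 0 < measure Q A \<and> measure Q A \<le> 1 - v / 2}
     \<le> Inf {KLdiv P Q |P. P \<in> Pset M \<and> ennreal v \<le> TV M P Q}"
  proof (rule Inf_greatest)
    fix s assume "s \<in> {KLdiv P Q |P. P \<in> Pset M \<and> ennreal v \<le> TV M P Q}"
    then obtain P where P: "P \<in> Pset M" "ennreal v \<le> TV M P Q" and s: "s = KLdiv P Q" by blast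
    show "Inf {KL2 (measure Q A + v / 2) (measure Q A) | A.
           A \<in> sets M \<and> 0 < measure Q A \<and> measure Q A \<le> 1 - v / 2} \<le> s"
    proof (cases "KLdiv P Q = \<infinity>")
      case True then show ?thesis using s by simp
    next
      case False
      then obtain A where A: "A \<in> sets M" "0 < measure Q A" "measure Q A \<le> 1 - v / 2"
        "KL2 (measure Q A + v / 2) (measure Q A) \<le> KLdiv P Q"
        using lower[OF assms(1,2) P(1) assms(3) P(2)] by blast
      then show ?thesis using s by (intro Inf_lower2[of "KL2 (measure Q A + v / 2) (measure Q A)"]) blast+
    qed
  qed
qed

end
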